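(* Let $V=\{v_1,\dots,v_m\}\subset\mathbb{R}^d$ be a finite set of points and $r\in\mathbb{R}^d$. Let $S\subset V$ be $r$-balanced and let $\{S_1,\dots,S_k\}$ be the family of all minimal $r$-balanced subsets of $S$. Then $S=\bigcup_{i=1}^k S_i$.
   Context: A subset $S\subset V$ is $r$-balanced if $r\in\mathrm{relint}(\mathrm{conv}(S))$ (relative interior within the affine hull of $S$); it is minimal $r$-balanced if it is $r$-balanced and no proper subset of it is $r$-balanced. *)

theory Defs
  imports "HOL-Analysis.Analysis"
begin

definition r_balanced :: "'a::euclidean_space \<Rightarrow> 'a set \<Rightarrow> bool" where
  "r_balanced r S \<longleftrightarrow> r \<in> rel_interior (convex hull S)"

definition minimal_r_balanced :: "'a::euclidean_space \<Rightarrow> 'a set \<Rightarrow> bool" where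
  "minimal_r_balanced r S \<longleftrightarrow> r_balanced r S \<and> (\<forall>T. T \<subset> S \<longrightarrow> \<not> r_balanced r T)"

end

theory Submission
  imports Defs
begin

lemma bal_iff:
  fixes S :: "'a::euclidean_space set"
  assumes "finite S"
  shows "r_balanced r S \<longleftrightarrow> (\<exists>u. (\<forall>x\<in>S. 0 < u x) \<and> sum u S = 1 \<and> (\<Sum>x\<in>S. u x *\<^sub>R x) = r)"
proof -
  have "rel_interior (convex hull (\<Union>((\<lambda>x. {x}) ` S))) =
    {sum (\<lambda>i. c i *\<^sub>R s i) S | c s. (\<forall>i\<in>S. c i > 0) \<and> sum c S = 1 \<and>
      (\<forall>i\<in>S. s i \<in> rel_interior {i})}"
    by (rule rel_interior_convex_hull_union) (use assms in auto)
  hence eq: "rel_interior (convex hull S) =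
    {sum (\<lambda>i. c i *\<^sub>R s i) S | c s. (\<forall>i\<in>S. c i > 0) \<and> sum c S = 1 \<and>
      (\<forall>i\<in>S. s i = i)}" by simp
  show ?thesis
  proof
    assume "r_balanced r S"
    then obtain c s where "(\<forall>i\<in>S. c i > 0)" "sum c S = 1" "(\<forall>i\<in>S. s i = i)"
      "r = sum (\<lambda>i. c i *\<^sub>R s i) S"
      unfolding r_balanced_def eq by blast
    then show "\<exists>u. (\<forall>x\<in>S. 0 < u x) \<and> sum u S = 1 \<and> (\<Sum>x\<in>S. u x *\<^sub>R x) = r"
      by (intro exI[of _ c]) (auto intro: sum.cong)
  next
    assume "\<exists>u. (\<forall>x\<in>S. 0 < u x) \<and> sum u S = 1 \<and> (\<Sum>x\<in>S. u x *\<^sub>R x) = r"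
    then obtain u where "(\<forall>x\<in>S. 0 < u x)" "sum u S = 1" "(\<Sum>x\<in>S. u x *\<^sub>R x) = r" by blast
    then show "r_balanced r S" unfolding r_balanced_def eq
      by (intro CollectI exI[of _ u] exI[of _ "\<lambda>x. x"]) auto
  qed
qed


lemma exchange:
  fixes T U :: "'a::euclidean_space set"
  assumes fin: "finite T" and UT: "U \<subset> T" and bT: "r_balanced r T" and bU: "r_balanced r U"
  shows "\<exists>W. T - U \<subseteq> W \<and> W \<subset> T \<and> r_balanced r W"
proof -
  have finU: "finite U" using UT fin finite_subset by blast
  obtain l where lpos: "\<forall>x\<in>T. 0 < l x" and l1: "sum l T = 1" and lr: "(\<Sum>x\<in>T. l x *\<^sub>R x) = r"
    using bT bal_iff[OF fin] by blast
  obtain mu where mpos: "\<forall>x\<in>U. 0 < mu x" and m1: "sum mu U = 1" and mr: "(\<Sum>x\<in>U. mu x *\<^sub>R x) = r"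
    using bU bal_iff[OF finU] by blast
  define m where "m x = (if x \<in> U then mu x else 0)" for x
  have mT1: "sum m T = 1"
  proof -
    have "sum m T = sum m U" using UT fin by (intro sum.mono_neutral_right) (auto simp: m_def)
    also have "\<dots> = sum mu U" by (rule sum.cong) (auto simp: m_def)
    finally show ?thesis using m1 by simp
  qed
  have mTr: "(\<Sum>x\<in>T. m x *\<^sub>R x) = r"
  proof -
    have "(\<Sum>x\<in>T. m x *\<^sub>R x) = (\<Sum>x\<in>U. m x *\<^sub>R x)" using UT fin by (intro sum.mono_neutral_right) (auto simp: m_def)
    also have "\<dots> = (\<Sum>x\<in>U. mu x *\<^sub>R x)" by (rule sum.cong) (auto simp: m_def)
    finally show ?thesis using mr by simp
  qed
  define D where "D = {x\<in>U. l x < mu x}"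
  have finD: "finite D" using finU D_def by simp
  have Dne: "D \<noteq> {}"
  proof
    assume "D = {}"
    hence ge: "\<forall>x\<in>U. mu x \<le> l x" unfolding D_def by force
    have "sum mu U \<le> sum l U" using ge by (simp add: sum_mono)
    moreover have "0 < sum l (T - U)"
      using UT lpos fin by (intro sum_pos) auto
    moreover have "sum l T = sum l U + sum l (T - U)"
      using UT fin by (metis add.commute psubset_imp_subset sum.subset_diff)
    ultimately show False using l1 m1 by linarith
  qed
  define q where "q x = l x / (mu x - l x)" for x
  define t where "t = Min (q ` D)"
  obtain x0 where x0D: "x0 \<in> D" and tx0: "t = q x0"
  proof -
    have "t \<in> q ` D" unfolding t_def using finD Dne by (intro Min_in) auto
    thus ?thesis using that by blast
  qed
  have tle: "\<forall>x\<in>D. t \<le> q x" using finD t_def by auto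
  have tpos: "0 < t" using x0D lpos UT unfolding tx0 q_def D_def by auto
  define w where "w x = (1 + t) * l x - t * m x" for x
  have wnn: "\<forall>x\<in>T. 0 \<le> w x"
  proof
    fix x assume xT: "x \<in> T"
    show "0 \<le> w x"
    proof (cases "x \<in> D")
      case True
      hence "t \<le> l x / (mu x - l x)" "l x < mu x" "x \<in> U" using tle q_def D_def by auto
      hence "t * (mu x - l x) \<le> l x" by (simp add: pos_le_divide_eq)
      thus ?thesis using \<open>x \<in> U\<close> unfolding w_def m_def by (simp add: algebra_simps)
    next
      case False
      hence "m x \<le> l x" using xT lpos unfolding m_def D_def by auto
      hence a: "t * m x \<le> t * l x" using tpos by (simp add: mult_left_mono)
      have "0 < l x" using xT lpos by auto
      thus ?thesis using a unfolding w_def by (simp add: algebra_simps)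
    qed
  qed
  have w0: "w x0 = 0"
  proof -
    have "x0 \<in> U" "l x0 < mu x0" using x0D D_def by auto
    thus ?thesis unfolding w_def m_def using tx0 q_def by (simp add: field_simps)
  qed
  define W where "W = {x\<in>T. 0 < w x}"
  have finW: "finite W" using fin W_def by simp
  have wT1: "sum w T = 1" using l1 mT1 unfolding w_def
    by (simp add: sum_subtractf sum_distrib_left[symmetric])
  have wTr: "(\<Sum>x\<in>T. w x *\<^sub>R x) = r"
  proof -
    have "(\<Sum>x\<in>T. w x *\<^sub>R x) = (\<Sum>x\<in>T. (1 + t) *\<^sub>R (l x *\<^sub>R x) - t *\<^sub>R (m x *\<^sub>R x))"
      unfolding w_def by (rule sum.cong) (auto simp: scaleR_diff_left)
    also have "\<dots> = (1 + t) *\<^sub>R (\<Sum>x\<in>T. l x *\<^sub>R x) - t *\<^sub>R (\<Sum>x\<in>T. m x *\<^sub>R x)"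
      by (simp add: sum_subtractf scaleR_sum_right)
    also have "\<dots> = r" using lr mTr by (simp add: scaleR_add_left)
    finally show ?thesis .
  qed
  have WT: "W \<subseteq> T" unfolding W_def by blast
  have zero: "\<forall>x\<in>T - W. w x = 0" using wnn unfolding W_def by force
  have wpos: "\<forall>x\<in>W. 0 < w x" unfolding W_def by blast
  have "sum w W = sum w T" using zero fin WT by (intro sum.mono_neutral_left) auto
  moreover have "(\<Sum>x\<in>W. w x *\<^sub>R x) = (\<Sum>x\<in>T. w x *\<^sub>R x)"
    using zero fin WT by (intro sum.mono_neutral_left) auto
  ultimately have "(\<forall>x\<in>W. 0 < w x) \<and> sum w W = 1 \<and> (\<Sum>x\<in>W. w x *\<^sub>R x) = r"
    using wpos wT1 wTr by simp
  hence "r_balanced r W" using bal_iff[OF finW] by blast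
  moreover have "T - U \<subseteq> W"
  proof
    fix x assume xTU: "x \<in> T - U"
    hence "m x = 0" "0 < l x" using lpos unfolding m_def by auto
    hence "0 < w x" using tpos unfolding w_def by simp
    thus "x \<in> W" using xTU unfolding W_def by blast
  qed
  moreover have "x0 \<notin> W" using w0 unfolding W_def by simp
  moreover have "x0 \<in> T" using x0D UT unfolding D_def by blast
  moreover note WT
  ultimately show ?thesis by blast
qed

theorem corollary1:
  fixes V S :: "'a::euclidean_space set" and r :: 'a
  assumes "finite V" and "S \<subseteq> V" and "r_balanced r S"
  shows "S = \<Union> {T. T \<subseteq> S \<and> minimal_r_balanced r T}"
proof
  show "\<Union> {T. T \<subseteq> S \<and> minimal_r_balanced r T} \<subseteq> S" by blast
next
  have finS: "finite S" using assms finite_subset by blast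
  show "S \<subseteq> \<Union> {T. T \<subseteq> S \<and> minimal_r_balanced r T}"
  proof
    fix v assume vS: "v \<in> S"
    define F where "F = {T. T \<subseteq> S \<and> v \<in> T \<and> r_balanced r T}"
    have "S \<in> F" using vS assms F_def by auto
    then obtain T where TF: "T \<in> F" and Tmin: "\<forall>T'\<in>F. card T \<le> card T'"
      using ex_has_least_nat[of "\<lambda>T. T \<in> F" S card] by blast
    have TS: "T \<subseteq> S" and vT: "v \<in> T" and bT: "r_balanced r T" using TF F_def by auto
    have finT: "finite T" using TS finS finite_subset by blast
    have "minimal_r_balanced r T"
      unfolding minimal_r_balanced_def
    proof (intro conjI bT allI impI notI)
      fix U assume UT: "U \<subset> T" and bU: "r_balanced r U"
      have cU: "card U < card T" using UT finT psubset_card_mono by blast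
      show False
      proof (cases "v \<in> U")
        case True
        hence "U \<in> F" using UT TS bU F_def by auto
        thus False using Tmin cU by force
      next
        case False
        obtain W where "T - U \<subseteq> W" "W \<subset> T" "r_balanced r W"
          using exchange[OF finT UT bT bU] by blast
        moreover have "card W < card T" using \<open>W \<subset> T\<close> finT psubset_card_mono by blast
        ultimately have "W \<in> F" "card W < card T" using False vT TS F_def by auto
        thus False using Tmin by force
      qed
    qed
    thus "v \<in> \<Union> {T. T \<subseteq> S \<and> minimal_r_balanced r T}" using TS vT by blast
  qed
qed

end
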